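(* Let $\langle A, \leq, \otimes, \mathbf{1}\rangle$ be a partially ordered monoid and let $C'(A) = \{c \in A \mid \exists a,b \in A.\ a < b \wedge a \otimes c = b \otimes c\}$. Then $C'(A)$ is an ideal of $A$. If moreover $\otimes$ is monotone (i.e. $a \leq b$ implies $a \otimes c \leq b \otimes c$ for all $a,b,c\in A$), then $I'(A) = A \setminus C'(A)$ is a sub-monoid of $\langle A,\otimes,\mathbf{1}\rangle$ and $C'(A)$ is a prime ideal of $A$.
   Context: A partially ordered monoid $\langle A, \leq, \otimes, \mathbf{1}\rangle$ consists of a partial order $\langle A,\leq\rangle$ and a commutative monoid $\langle A, \otimes, \mathbf{1}\rangle$; $a<b$ means $a\leq b$ and $a\neq b$. A subset $J\subseteq A$ is an ideal if $a\otimes c\in J$ for all $a\in A$, $c\in J$; it is prime if moreover $a\otimes b\in J$ implies $a\in J$ or $b\in J$. A sub-monoid is a subset containing $\mathbf{1}$ and closed under $\otimes$. *)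

theory Defs
  imports Main
begin

text \<open>A partially ordered monoid: the partial order is the type-class order of 'a,
  and (f, e) form a commutative monoid (library locale comm_monoid).
  The carrier A is the whole type.\<close>

definition pomonoid :: "('a::order \<Rightarrow> 'a \<Rightarrow> 'a) \<Rightarrow> 'a \<Rightarrow> bool" where
  "pomonoid f e \<longleftrightarrow> comm_monoid f e"

definition C' :: "('a::order \<Rightarrow> 'a \<Rightarrow> 'a) \<Rightarrow> 'a set" where
  "C' f = {c. \<exists>a b. a < b \<and> f a c = f b c}"

definition I' :: "('a::order \<Rightarrow> 'a \<Rightarrow> 'a) \<Rightarrow> 'a set" where
  "I' f = UNIV - C' f"

definition is_ideal :: "('a \<Rightarrow> 'a \<Rightarrow> 'a) \<Rightarrow> 'a set \<Rightarrow> bool" where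
  "is_ideal f J \<longleftrightarrow> (\<forall>a c. c \<in> J \<longrightarrow> f a c \<in> J)"

definition is_prime_ideal :: "('a \<Rightarrow> 'a \<Rightarrow> 'a) \<Rightarrow> 'a set \<Rightarrow> bool" where
  "is_prime_ideal f J \<longleftrightarrow> is_ideal f J \<and> (\<forall>a b. f a b \<in> J \<longrightarrow> a \<in> J \<or> b \<in> J)"

definition is_submonoid :: "('a \<Rightarrow> 'a \<Rightarrow> 'a) \<Rightarrow> 'a \<Rightarrow> 'a set \<Rightarrow> bool" where
  "is_submonoid f e S \<longleftrightarrow> e \<in> S \<and> (\<forall>a b. a \<in> S \<longrightarrow> b \<in> S \<longrightarrow> f a b \<in> S)"

definition monotone_op :: "('a::order \<Rightarrow> 'a \<Rightarrow> 'a) \<Rightarrow> bool" where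
  "monotone_op f \<longleftrightarrow> (\<forall>a b c. a \<le> b \<longrightarrow> f a c \<le> f b c)"

end

theory Submission
  imports Defs
begin

theorem lemma6:
  fixes f :: "'a::order \<Rightarrow> 'a \<Rightarrow> 'a" and e :: 'a
  assumes "pomonoid f e"
  shows "is_ideal f (C' f) \<and>
    (monotone_op f \<longrightarrow> is_submonoid f e (I' f) \<and> is_prime_ideal f (C' f))"
proof -
  interpret M: comm_monoid f e using assms unfolding pomonoid_def .
  have id: "is_ideal f (C' f)"
    unfolding is_ideal_def C'_def
  proof (intro allI impI, simp)
    fix d c assume "\<exists>a b. a < b \<and> f a c = f b c"
    then obtain a b where "a < b" "f a c = f b c" by blast
    then have "f a (f d c) = f b (f d c)"
      by (metis M.assoc M.commute)
    with \<open>a < b\<close> show "\<exists>a b. a < b \<and> f a (f d c) = f b (f d c)" by blast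
  qed
  have key: "f a b \<in> C' f \<Longrightarrow> a \<in> C' f \<or> b \<in> C' f" if mono: "monotone_op f" for a b
  proof -
    assume "f a b \<in> C' f"
    then obtain x y where xy: "x < y" "f x (f a b) = f y (f a b)" unfolding C'_def by blast
    then have eq: "f (f x a) b = f (f y a) b" by (simp add: M.assoc)
    have le: "f x a \<le> f y a" using mono xy(1) unfolding monotone_op_def by auto
    show ?thesis
    proof (cases "f x a = f y a")
      case True then show ?thesis using xy(1) unfolding C'_def by blast
    next
      case False then have "f x a < f y a" using le by auto
      then show ?thesis using eq unfolding C'_def by blast
    qed
  qed
  have e: "e \<notin> C' f" unfolding C'_def by auto
  show ?thesis
    using id key e unfolding is_submonoid_def is_prime_ideal_def I'_def by blast
qed

end
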